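(* Let $P$ be a probability distribution on a measurable space $\Omega$, let $\mathcal{Y}\subset\mathbb{R}^n$, and for each $y\in\mathcal{Y}$ let $G(y)\subset\Omega$ be a measurable set (the set $\{(y,\omega):\omega\in G(y)\}$ being jointly measurable), and put $\epsilon(y)=1-P(G(y))$. Fix $\epsilon,\delta\in(0,1)$ and positive numbers $\kappa_1,\kappa_2,\dots$ with $\sum_{s\geq1}\kappa_s^{-1}\leq 1$, and integers $N_s\geq \ln(\kappa_s/\delta)/\epsilon$. Consider a randomized procedure which at steps $s=1,2,\dots$ chooses a point $y^s\in\mathcal{Y}$ as a measurable deterministic function of all samples drawn at the steps preceding $s$, then draws $N_s$ samples $\omega^1_s,\dots,\omega^{N_s}_s$ from $P$, independent of each other and of all previously drawn samples, and stops with output $y^s$ if $\omega^\ell_s\in G(y^s)$ for all $\ell\leq N_s$ (otherwise it proceeds to step $s+1$, or may stop without output). Then the probability of the event "the procedure stops at some step $s$ with output $y^s$ satisfying $\epsilon(y^s)\geq\epsilon$" is at most $\delta$.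
   Context: In the application, $\omega=\xi^K$ is the random data trajectory and $G(y)$ is the set of realizations for which, for every $t\leq K$, there exists $x_t$ with $(y,x_t)\in\mathcal{Z}^t_{\xi_t}$; a point $y$ with $\epsilon(y)\leq\epsilon$ is then called $(1-\epsilon)$-implementable. A typical choice is $\kappa_s=s^2\sum_{r\geq1}r^{-2}$ and $N_s$ the smallest integer strictly greater than $\ln(\kappa_s/\delta)/\epsilon$. *)

theory Defs
  imports "HOL-Probability.Probability"
begin

text \<open>Sample trajectory: a function on index pairs (s,l); sample l (1 \<le> l \<le> N s) drawn at step s (s \<ge> 1).\<close>

definition step_idx :: "(nat \<Rightarrow> nat) \<Rightarrow> nat \<Rightarrow> (nat \<times> nat) set" where
  "step_idx N s = {(r, l). r = s \<and> 1 \<le> l \<and> l \<le> N s}"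

definition before_idx :: "(nat \<Rightarrow> nat) \<Rightarrow> nat \<Rightarrow> (nat \<times> nat) set" where
  "before_idx N s = {(r, l). 1 \<le> r \<and> r < s \<and> 1 \<le> l \<and> l \<le> N r}"

definition upto_idx :: "(nat \<Rightarrow> nat) \<Rightarrow> nat \<Rightarrow> (nat \<times> nat) set" where
  "upto_idx N s = {(r, l). 1 \<le> r \<and> r \<le> s \<and> 1 \<le> l \<and> l \<le> N r}"

definition viol :: "'w measure \<Rightarrow> ('y \<Rightarrow> 'w set) \<Rightarrow> 'y \<Rightarrow> real" where
  "viol P G y = 1 - measure P (G y)"

end

theory Submission
  imports Defs
begin

theorem mainTheorem4:
  fixes P :: "'w measure"
    and Y :: "(real ^ 'n) set"
    and G :: "real ^ 'n \<Rightarrow> 'w set"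
    and eps delta :: real
    and kappa :: "nat \<Rightarrow> real"
    and N :: "nat \<Rightarrow> nat"
    and f :: "nat \<Rightarrow> ((nat \<times> nat) \<Rightarrow> 'w) \<Rightarrow> real ^ 'n"
    and H :: "nat \<Rightarrow> ((nat \<times> nat) \<Rightarrow> 'w) set"
  assumes P: "prob_space P"
    and G_meas: "\<And>y. y \<in> Y \<Longrightarrow> G y \<in> sets P"
    and G_joint: "{(y, w). y \<in> Y \<and> w \<in> G y} \<in> sets (restrict_space borel Y \<Otimes>\<^sub>M P)"
    and eps: "0 < eps" "eps < 1"
    and delta: "0 < delta" "delta < 1"
    and kappa_pos: "\<And>s. 1 \<le> s \<Longrightarrow> 0 < kappa s"
    and kappa_summable: "summable (\<lambda>s. 1 / kappa (Suc s))"
    and kappa_sum: "(\<Sum>s. 1 / kappa (Suc s)) \<le> 1"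
    and N_ge: "\<And>s. 1 \<le> s \<Longrightarrow> real (N s) \<ge> ln (kappa s / delta) / eps"
    and f_meas: "\<And>s. 1 \<le> s \<Longrightarrow>
        f s \<in> PiM (before_idx N s) (\<lambda>_. P) \<rightarrow>\<^sub>M restrict_space borel Y"
    and H_meas: "\<And>s. 1 \<le> s \<Longrightarrow> H s \<in> sets (PiM (upto_idx N s) (\<lambda>_. P))"
  defines "E \<equiv> {\<omega> \<in> space (PiM UNIV (\<lambda>_::nat \<times> nat. P)).
              \<exists>s \<ge> 1. (\<forall>r. 1 \<le> r \<and> r < s \<longrightarrow>
                         \<not> (\<forall>i \<in> step_idx N r. \<omega> i \<in> G (f r (restrict \<omega> (before_idx N r)))) \<and> restrict \<omega> (upto_idx N r) \<notin> H r)
                    \<and> (\<forall>i \<in> step_idx N s. \<omega> i \<in> G (f s (restrict \<omega> (before_idx N s)))) \<and> viol P G (f s (restrict \<omega> (before_idx N s))) \<ge> eps}"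
  shows "E \<in> sets (PiM UNIV (\<lambda>_::nat \<times> nat. P)) \<and>
         measure (PiM UNIV (\<lambda>_::nat \<times> nat. P)) E \<le> delta"
proof -
  let ?M = "PiM UNIV (\<lambda>_::nat \<times> nat. P)"
  interpret P: prob_space P by (rule P)
  interpret PP: product_prob_space "\<lambda>_::nat\<times>nat. P" UNIV
    by (simp add: product_prob_space_def product_prob_space_axioms_def product_sigma_finite_def
        P prob_space_imp_sigma_finite)
  define RY where "RY = restrict_space (borel :: (real ^ 'n) measure) Y"
  define Gs where "Gs = {(y, w). y \<in> Y \<and> w \<in> G y}"
  define y where "y r \<omega> = f r (restrict \<omega> (before_idx N r))" for r \<omega>
  have Gs: "Gs \<in> sets (RY \<Otimes>\<^sub>M P)" using G_joint unfolding Gs_def RY_def .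
  have spRY: "space RY = Y" by (simp add: RY_def space_restrict_space)
  have Gsub: "\<And>y. y \<in> Y \<Longrightarrow> G y \<subseteq> space P" using G_meas sets.sets_into_space by blast
  have viol_meas: "(\<lambda>y. viol P G y) \<in> borel_measurable RY"
  proof -
    have "(\<lambda>x. emeasure P (Pair x -` Gs)) \<in> borel_measurable RY"
      by (rule P.measurable_emeasure_Pair[OF Gs])
    then have "(\<lambda>x. 1 - enn2real (emeasure P (Pair x -` Gs))) \<in> borel_measurable RY"
      by measurable
    moreover have "\<And>x. x \<in> space RY \<Longrightarrow> 1 - enn2real (emeasure P (Pair x -` Gs)) = viol P G x"
      by (auto simp: spRY Gs_def viol_def measure_def)
    ultimately show ?thesis using measurable_cong by (smt (verit, best))
  qed
  have y_meas: "\<And>r::nat. 1 \<le> r \<Longrightarrow> y r \<in> ?M \<rightarrow>\<^sub>M RY"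
    unfolding y_def RY_def by (rule measurable_compose[OF measurable_restrict_subset f_meas]) auto
  have y_Y: "\<And>(r::nat) \<omega>. 1 \<le> r \<Longrightarrow> \<omega> \<in> space ?M \<Longrightarrow> y r \<omega> \<in> Y"
  proof -
    fix r :: nat and \<omega> assume r: "1 \<le> r" and w: "\<omega> \<in> space ?M"
    from measurable_space[OF y_meas[OF r] w] show "y r \<omega> \<in> Y" by (simp add: spRY)
  qed
  have predG: "\<And>(r::nat) i. 1 \<le> r \<Longrightarrow> Measurable.pred ?M (\<lambda>\<omega>. \<omega> i \<in> G (y r \<omega>))"
  proof -
    fix r :: nat and i assume r: "1 \<le> r"
    have mp: "(\<lambda>\<omega>. (y r \<omega>, \<omega> i)) \<in> ?M \<rightarrow>\<^sub>M RY \<Otimes>\<^sub>M P"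
      using y_meas[OF r] by measurable
    have "Measurable.pred ?M (\<lambda>\<omega>. (y r \<omega>, \<omega> i) \<in> Gs)" using pred_sets2[OF Gs mp] by simp
    moreover have "{\<omega>\<in>space ?M. \<omega> i \<in> G (y r \<omega>)} = {\<omega>\<in>space ?M. (y r \<omega>, \<omega> i) \<in> Gs}"
      using y_Y[OF r] by (auto simp: Gs_def)
    ultimately show "Measurable.pred ?M (\<lambda>\<omega>. \<omega> i \<in> G (y r \<omega>))" by (simp add: pred_def)
  qed
  have predV: "\<And>r::nat. 1 \<le> r \<Longrightarrow> Measurable.pred ?M (\<lambda>\<omega>. eps \<le> viol P G (y r \<omega>))"
    using measurable_compose[OF y_meas viol_meas] by measurable
  have predH: "\<And>r::nat. 1 \<le> r \<Longrightarrow> Measurable.pred ?M (\<lambda>\<omega>. restrict \<omega> (upto_idx N r) \<in> H r)"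
    by (rule pred_sets2[OF H_meas measurable_restrict_subset]) auto
  have E_eq: "E = {\<omega> \<in> space ?M. \<exists>s. 1 \<le> s \<and> (\<forall>r. 1 \<le> r \<and> r < s \<longrightarrow>
                         \<not> (\<forall>i \<in> step_idx N r. \<omega> i \<in> G (y r \<omega>)) \<and> restrict \<omega> (upto_idx N r) \<notin> H r)
                    \<and> (\<forall>i \<in> step_idx N s. \<omega> i \<in> G (y s \<omega>)) \<and> eps \<le> viol P G (y s \<omega>)}"
    unfolding E_def y_def by auto
  have Emeas: "E \<in> sets ?M"
  proof -
    have A: "Measurable.pred ?M (\<lambda>\<omega>. 1 \<le> r \<and> r < s \<longrightarrow>
                         \<not> (\<forall>i \<in> step_idx N r. \<omega> i \<in> G (y r \<omega>)) \<and> restrict \<omega> (upto_idx N r) \<notin> H r)" for r s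
      by (intro pred_intros_imp' pred_intros_logic pred_intros_countable_bounded predG predH) auto
    have B: "Measurable.pred ?M (\<lambda>\<omega>. 1 \<le> s \<and> (\<forall>r. 1 \<le> r \<and> r < s \<longrightarrow>
                         \<not> (\<forall>i \<in> step_idx N r. \<omega> i \<in> G (y r \<omega>)) \<and> restrict \<omega> (upto_idx N r) \<notin> H r)
                    \<and> (\<forall>i \<in> step_idx N s. \<omega> i \<in> G (y s \<omega>)) \<and> eps \<le> viol P G (y s \<omega>))" for s
      by (intro pred_intros_conj1' pred_intros_logic pred_intros_countable pred_intros_countable_bounded A predG predV) auto
    have "Measurable.pred ?M (\<lambda>\<omega>. \<exists>s. 1 \<le> s \<and> (\<forall>r. 1 \<le> r \<and> r < s \<longrightarrow>
                         \<not> (\<forall>i \<in> step_idx N r. \<omega> i \<in> G (y r \<omega>)) \<and> restrict \<omega> (upto_idx N r) \<notin> H r)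
                    \<and> (\<forall>i \<in> step_idx N s. \<omega> i \<in> G (y s \<omega>)) \<and> eps \<le> viol P G (y s \<omega>))"
      by (intro pred_intros_countable B)
    then show ?thesis unfolding E_eq pred_def .
  qed
  define Es where "Es s = {\<omega> \<in> space ?M. (\<forall>i\<in>step_idx N s. \<omega> i \<in> G (y s \<omega>)) \<and> eps \<le> viol P G (y s \<omega>)}" for s
  have Es_meas: "Es s \<in> sets ?M" if s: "1 \<le> s" for s :: nat
  proof -
    have "Measurable.pred ?M (\<lambda>\<omega>. (\<forall>i\<in>step_idx N s. \<omega> i \<in> G (y s \<omega>)) \<and> eps \<le> viol P G (y s \<omega>))"
      using s by (intro pred_intros_logic pred_intros_countable_bounded predG predV) auto
    then show ?thesis unfolding Es_def pred_def .
  qed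
  have E_sub: "E \<subseteq> (\<Union>s. Es (Suc s))"
  proof
    fix \<omega> assume "\<omega> \<in> E"
    then obtain s where w: "\<omega> \<in> space ?M" "1 \<le> s" "(\<forall>i\<in>step_idx N s. \<omega> i \<in> G (y s \<omega>))" "eps \<le> viol P G (y s \<omega>)"
      unfolding E_eq by blast
    then have "\<omega> \<in> Es (Suc (s - 1))" by (simp add: Es_def)
    then show "\<omega> \<in> (\<Union>s. Es (Suc s))" by blast
  qed
  have bound: "emeasure ?M (Es s) \<le> ennreal (delta / kappa s)" if s: "1 \<le> s" for s :: nat
  proof -
    define B where "B = before_idx N s"
    define S where "S = step_idx N s"
    let ?PB = "PiM B (\<lambda>_. P)"
    let ?PS = "PiM S (\<lambda>_. P)"
    have B_eq: "B = Sigma {1..<s} (\<lambda>r. {1..N r})" by (auto simp: B_def before_idx_def)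
    have S_eq: "S = (\<lambda>l. (s,l)) ` {1..N s}" by (auto simp: S_def step_idx_def)
    have finB: "finite B" by (simp add: B_eq)
    have finS: "finite S" by (simp add: S_eq)
    have cardS: "card S = N s" by (simp add: S_eq card_image inj_on_def)
    have BS: "B \<inter> S = {}" by (auto simp: B_def S_def before_idx_def step_idx_def)
    have dcomp: "distr ?M P (\<lambda>x. x i) = P" for i
    proof (rule measure_eqI)
      show "sets (distr ?M P (\<lambda>x. x i)) = sets P" by simp
      fix A assume A: "A \<in> sets (distr ?M P (\<lambda>x. x i))"
      then have A': "A \<in> sets P" by simp
      have "(\<lambda>x. x i) -` A \<inter> space ?M = prod_emb UNIV (\<lambda>_. P) {i} (PiE {i} (\<lambda>_. A))"
        by (auto simp: prod_emb_def space_PiM PiE_iff)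
      then show "emeasure (distr ?M P (\<lambda>x. x i)) A = emeasure P A"
        using A' by (simp add: emeasure_distr PP.emeasure_PiM_emb)
    qed
    have ind: "PP.indep_vars (\<lambda>_. P) (\<lambda>i \<omega>. \<omega> i) UNIV"
      using PP.indep_vars_iff_distr_eq_PiM[where I=UNIV and M'="\<lambda>_. P" and X="\<lambda>i \<omega>. \<omega> i"]
      by (simp add: dcomp restrict_UNIV)
    have indBS: "PP.indep_var ?PB (\<lambda>\<omega>. restrict \<omega> B) ?PS (\<lambda>\<omega>. restrict \<omega> S)"
      using PP.indep_var_restrict[OF ind BS] by simp
    have dB: "distr ?M ?PB (\<lambda>\<omega>. restrict \<omega> B) = ?PB"
      by (rule PP.distr_PiM_restrict_finite[OF finB]) simp
    have dS: "distr ?M ?PS (\<lambda>\<omega>. restrict \<omega> S) = ?PS"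
      by (rule PP.distr_PiM_restrict_finite[OF finS]) simp
    have joint: "distr ?M (?PB \<Otimes>\<^sub>M ?PS) (\<lambda>\<omega>. (restrict \<omega> B, restrict \<omega> S)) = ?PB \<Otimes>\<^sub>M ?PS"
      using indBS[unfolded PP.indep_var_distribution_eq] dB dS by simp
    define Q where "Q = {p \<in> space (?PB \<Otimes>\<^sub>M ?PS). (\<forall>i\<in>S. snd p i \<in> G (f s (fst p))) \<and> eps \<le> viol P G (f s (fst p))}"
    have fB: "f s \<in> ?PB \<rightarrow>\<^sub>M RY" using f_meas[OF s] by (simp add: B_def RY_def)
    have fY: "f s x \<in> Y" if "x \<in> space ?PB" for x using measurable_space[OF fB that] spRY by auto
    have Qmeas: "Q \<in> sets (?PB \<Otimes>\<^sub>M ?PS)"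
    proof -
      have pG: "Measurable.pred (?PB \<Otimes>\<^sub>M ?PS) (\<lambda>p. snd p i \<in> G (f s (fst p)))" if i: "i \<in> S" for i
      proof -
        have mp: "(\<lambda>p. (f s (fst p), snd p i)) \<in> (?PB \<Otimes>\<^sub>M ?PS) \<rightarrow>\<^sub>M RY \<Otimes>\<^sub>M P"
          using fB i by measurable
        have "Measurable.pred (?PB \<Otimes>\<^sub>M ?PS) (\<lambda>p. (f s (fst p), snd p i) \<in> Gs)" using pred_sets2[OF Gs mp] by simp
        moreover have "{p\<in>space (?PB \<Otimes>\<^sub>M ?PS). snd p i \<in> G (f s (fst p))} = {p\<in>space (?PB \<Otimes>\<^sub>M ?PS). (f s (fst p), snd p i) \<in> Gs}"
          using fY by (auto simp: Gs_def space_pair_measure)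
        ultimately show ?thesis by (simp add: pred_def)
      qed
      have pV: "Measurable.pred (?PB \<Otimes>\<^sub>M ?PS) (\<lambda>p. eps \<le> viol P G (f s (fst p)))"
        using measurable_compose[OF measurable_compose[OF measurable_fst fB] viol_meas] by measurable
      have "Measurable.pred (?PB \<Otimes>\<^sub>M ?PS) (\<lambda>p. (\<forall>i\<in>S. snd p i \<in> G (f s (fst p))) \<and> eps \<le> viol P G (f s (fst p)))"
        by (intro pred_intros_logic pred_intros_countable_bounded pG pV)
      then show ?thesis unfolding Q_def pred_def .
    qed
    have pm: "(\<lambda>\<omega>. (restrict \<omega> B, restrict \<omega> S)) \<in> ?M \<rightarrow>\<^sub>M (?PB \<Otimes>\<^sub>M ?PS)"
      by (intro measurable_Pair measurable_restrict_subset) auto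
    have Es_eq: "Es s = (\<lambda>\<omega>. (restrict \<omega> B, restrict \<omega> S)) -` Q \<inter> space ?M"
      using measurable_space[OF pm] by (auto simp: Es_def Q_def y_def B_def S_def)
    have "emeasure ?M (Es s) = emeasure (?PB \<Otimes>\<^sub>M ?PS) Q"
      using emeasure_distr[OF pm Qmeas] by (simp add: Es_eq joint)
    interpret PS: prob_space ?PS by (rule prob_space_PiM) (rule P)
    interpret PB: prob_space ?PB by (rule prob_space_PiM) (rule P)
    have "emeasure (?PB \<Otimes>\<^sub>M ?PS) Q = (\<integral>\<^sup>+x. emeasure ?PS (Pair x -` Q) \<partial>?PB)"
      by (rule PS.emeasure_pair_measure_alt[OF Qmeas])
    also have "\<dots> \<le> (\<integral>\<^sup>+x. ennreal ((1-eps)^N s) \<partial>?PB)"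
    proof (rule nn_integral_mono)
      fix x assume x: "x \<in> space ?PB"
      have yY: "f s x \<in> Y" using fY x .
      show "emeasure ?PS (Pair x -` Q) \<le> ennreal ((1-eps)^N s)"
      proof (cases "eps \<le> viol P G (f s x)")
        case True
        have "Pair x -` Q = PiE S (\<lambda>_. G (f s x))"
          using x True Gsub[OF yY] by (auto simp: Q_def space_pair_measure space_PiM PiE_iff extensional_def)
        then have "emeasure ?PS (Pair x -` Q) = (\<Prod>i\<in>S. emeasure P (G (f s x)))"
          using G_meas[OF yY] finS by (simp add: PP.emeasure_PiM)
        also have "\<dots> = ennreal (measure P (G (f s x))) ^ N s" by (simp add: P.emeasure_eq_measure cardS)
        also have "\<dots> = ennreal (measure P (G (f s x)) ^ N s)" by (simp add: ennreal_power)
        also have "\<dots> \<le> ennreal ((1-eps)^N s)"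
          by (rule ennreal_leI, rule power_mono) (use True in \<open>auto simp: viol_def\<close>)
        finally show ?thesis .
      next
        case False
        then have "Pair x -` Q = {}" by (auto simp: Q_def)
        then show ?thesis by simp
      qed
    qed
    also have "\<dots> = ennreal ((1-eps)^N s)" by (simp add: PB.emeasure_space_1)
    also have "\<dots> \<le> ennreal (delta / kappa s)"
    proof (rule ennreal_leI)
      have k: "0 < kappa s" using kappa_pos[OF s] .
      have kd: "0 < kappa s / delta" using k delta by simp
      have "1 - eps \<le> exp (- eps)" using exp_ge_add_one_self[of "-eps"] by simp
      then have "(1 - eps) ^ N s \<le> exp (- eps) ^ N s" by (rule power_mono) (use eps in simp)
      also have "\<dots> = exp (real (N s) * (- eps))" by (rule exp_of_nat_mult[symmetric])
      also have "\<dots> \<le> exp (- ln (kappa s / delta))"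
      proof -
        have "ln (kappa s / delta) \<le> real (N s) * eps"
          using N_ge[OF s] eps by (simp add: pos_divide_le_eq)
        then show ?thesis by simp
      qed
      also have "\<dots> = delta / kappa s" using kd by (simp add: exp_minus)
      finally show "(1 - eps) ^ N s \<le> delta / kappa s" .
    qed
    finally show ?thesis using \<open>emeasure ?M (Es s) = emeasure (?PB \<Otimes>\<^sub>M ?PS) Q\<close> by simp
  qed
  have Es_range: "range (\<lambda>s. Es (Suc s)) \<subseteq> sets ?M" using Es_meas by auto
  have kpos: "0 < kappa (Suc s)" for s using kappa_pos by simp
  have summ: "summable (\<lambda>s. delta / kappa (Suc s))"
    using summable_mult[OF kappa_summable, of delta] by simp
  have "emeasure ?M E \<le> emeasure ?M (\<Union>s. Es (Suc s))"
    using E_sub Es_range by (intro emeasure_mono) auto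
  also have "\<dots> \<le> (\<Sum>s. emeasure ?M (Es (Suc s)))"
    by (rule emeasure_subadditive_countably[OF Es_range])
  also have "\<dots> \<le> (\<Sum>s. ennreal (delta / kappa (Suc s)))"
    by (intro suminf_le bound summableI) simp
  also have "\<dots> = ennreal (\<Sum>s. delta / kappa (Suc s))"
    using kpos delta summ by (intro suminf_ennreal2) (auto intro: less_imp_le)
  also have "\<dots> \<le> ennreal delta"
  proof (rule ennreal_leI)
    have "(\<Sum>s. delta / kappa (Suc s)) = delta * (\<Sum>s. 1 / kappa (Suc s))"
      using suminf_mult[OF kappa_summable, of delta] by simp
    also have "\<dots> \<le> delta * 1" using kappa_sum delta by (intro mult_left_mono) auto
    finally show "(\<Sum>s. delta / kappa (Suc s)) \<le> delta" by simp
  qed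
  finally have "emeasure ?M E \<le> ennreal delta" .
  then have "measure ?M E \<le> delta"
    using delta by (simp add: PP.emeasure_eq_measure)
  with Emeas show ?thesis by simp
qed

end
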